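(* Let $\Omega$ be a compact metric space, $T:\Omega\to\Omega$ continuous with a dense orbit, $\mathcal{H}$ a complete metric space and $A:\Omega\to\mathrm{Isom}(\mathcal{H})$ continuous for the topology of uniform convergence on bounded sets. Let $F:\Omega\times\mathcal{H}\to\Omega\times\mathcal{H}$, $F(\omega,h)=(T\omega,A(\omega)\cdot h)$, and $I_T(\omega,h)=(T\omega,h)$. The following are equivalent: (P2) there exists $G:\Omega\to\mathrm{Homeo}(\mathcal{H})$, continuous for the pointwise topology, such that the map $\mathcal{G}(\omega,h)=(\omega,G(\omega)\cdot h)$ satisfies $\mathcal{G}^{-1}\circ F\circ\mathcal{G}=I_T$; (P3) for every $(\omega_0,h_0)\in\Omega\times\mathcal{H}$ there exists a continuous map $s_{\omega_0,h_0}:\Omega\to\mathcal{H}$ with $s_{\omega_0,h_0}(\omega_0)=h_0$ and $A(\omega)\cdot s_{\omega_0,h_0}(\omega)=s_{\omega_0,h_0}(T\omega)$ for all $\omega\in\Omega$, and for every $\omega_0,\omega\in\Omega$ the map $h_0\mapsto s_{\omega_0,h_0}(\omega)$ is continuous.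
   Context: Continuity of $A$ for uniform convergence on bounded sets: for every bounded $K\subset\mathcal{H}$, $\omega_0\in\Omega$, $\varepsilon>0$ there is $\delta>0$ with $d_{\mathcal{H}}(A(\omega)h,A(\omega_0)h)<\varepsilon$ for all $h\in K$ when $d_\Omega(\omega,\omega_0)<\delta$. $\mathrm{Homeo}(\mathcal{H})$ is the group of homeomorphisms of $\mathcal{H}$; $G:\Omega\to\mathrm{Homeo}(\mathcal{H})$ is continuous for the pointwise topology if $\omega\mapsto G(\omega)\cdot h$ is continuous for each $h\in\mathcal{H}$. *)

theory Defs
  imports "HOL-Analysis.Analysis"
begin

definition is_isom :: "('b::metric_space \<Rightarrow> 'b) \<Rightarrow> bool" where
  "is_isom f \<longleftrightarrow> (\<forall>x y. dist (f x) (f y) = dist x y) \<and> surj f"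

definition is_homeo :: "('b::topological_space \<Rightarrow> 'b) \<Rightarrow> bool" where
  "is_homeo g \<longleftrightarrow> (\<exists>g'. homeomorphism UNIV UNIV g g')"

definition cont_unif_bounded :: "('a::metric_space \<Rightarrow> 'b::metric_space \<Rightarrow> 'b) \<Rightarrow> bool" where
  "cont_unif_bounded A \<longleftrightarrow>
     (\<forall>K \<omega>0 \<epsilon>. bounded K \<and> \<epsilon> > 0 \<longrightarrow>
        (\<exists>\<delta>>0. \<forall>\<omega>. dist \<omega> \<omega>0 < \<delta> \<longrightarrow> (\<forall>h\<in>K. dist (A \<omega> h) (A \<omega>0 h) < \<epsilon>)))"

definition cont_pointwise :: "('a::topological_space \<Rightarrow> 'b::topological_space \<Rightarrow> 'b) \<Rightarrow> bool" where
  "cont_pointwise G \<longleftrightarrow> (\<forall>h. continuous_on UNIV (\<lambda>\<omega>. G \<omega> h))"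

definition has_dense_orbit :: "('a::topological_space \<Rightarrow> 'a) \<Rightarrow> bool" where
  "has_dense_orbit T \<longleftrightarrow> (\<exists>\<omega>. closure (range (\<lambda>n. (T ^^ n) \<omega>)) = UNIV)"

end

theory Submission
  imports Defs
begin

lemma orbit_closed_all:
  fixes T :: "'a::topological_space \<Rightarrow> 'a"
  assumes "closure (range (\<lambda>n. (T ^^ n) w)) = UNIV"
    and "closed S" and "\<And>n. (T ^^ n) w \<in> S"
  shows "x \<in> S"
proof -
  have "closure (range (\<lambda>n. (T ^^ n) w)) \<subseteq> S"
    by (rule closure_minimal) (use assms in auto)
  then show ?thesis using assms(1) by auto
qed

lemma sect_unique:
  fixes T :: "'a::topological_space \<Rightarrow> 'a" and s1 s2 :: "'a \<Rightarrow> 'b::metric_space"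
  assumes w: "closure (range (\<lambda>n. (T ^^ n) w)) = UNIV"
    and c1: "continuous_on UNIV s1" and c2: "continuous_on UNIV s2"
    and e1: "\<And>x. A x (s1 x) = s1 (T x)" and e2: "\<And>x. A x (s2 x) = s2 (T x)"
    and eq: "s1 w = s2 w"
  shows "s1 x = s2 x"
proof -
  have "\<And>n. (T ^^ n) w \<in> {x. s1 x = s2 x}"
  proof -
    fix n show "(T ^^ n) w \<in> {x. s1 x = s2 x}"
      by (induction n) (use eq in \<open>auto simp: e1[symmetric] e2[symmetric]\<close>)
  qed
  from orbit_closed_all[OF w closed_Collect_eq[OF c1 c2] this] show ?thesis by simp
qed

lemma sect_dist:
  fixes T :: "'a::topological_space \<Rightarrow> 'a" and s1 s2 :: "'a \<Rightarrow> 'b::metric_space"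
  assumes w: "closure (range (\<lambda>n. (T ^^ n) w)) = UNIV"
    and c1: "continuous_on UNIV s1" and c2: "continuous_on UNIV s2"
    and e1: "\<And>x. A x (s1 x) = s1 (T x)" and e2: "\<And>x. A x (s2 x) = s2 (T x)"
    and iso: "\<And>x. is_isom (A x)"
  shows "dist (s1 x) (s2 x) = dist (s1 w) (s2 w)"
proof -
  have cl: "closed {x. dist (s1 x) (s2 x) = dist (s1 w) (s2 w)}"
    by (rule closed_Collect_eq) (auto intro!: continuous_intros c1 c2)
  have "\<And>n. (T ^^ n) w \<in> {x. dist (s1 x) (s2 x) = dist (s1 w) (s2 w)}"
  proof -
    fix n show "(T ^^ n) w \<in> {x. dist (s1 x) (s2 x) = dist (s1 w) (s2 w)}"
      by (induction n) (use iso in \<open>auto simp: e1[symmetric] e2[symmetric] is_isom_def\<close>)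
  qed
  from orbit_closed_all[OF w cl this] show ?thesis by simp
qed

lemma homeo_facts:
  assumes "is_homeo g"
  shows "bij g" "continuous_on UNIV g" "continuous_on UNIV (inv g)"
proof -
  obtain g' where h: "homeomorphism UNIV UNIV g g'" using assms unfolding is_homeo_def by blast
  then have a: "\<And>x. g' (g x) = x" "\<And>y. g (g' y) = y"
    by (auto simp: homeomorphism_def)
  then show "bij g" by (metis bijI' )
  show "continuous_on UNIV g" using h by (auto simp: homeomorphism_def)
  have "inv g = g'" using a by (metis inv_equality ext)
  then show "continuous_on UNIV (inv g)" using h by (auto simp: homeomorphism_def)
qed

lemma isom_homeo:
  fixes g :: "'b::metric_space \<Rightarrow> 'b"
  assumes d: "\<And>x y. dist (g x) (g y) = dist x y" and s: "surj g"
  shows "is_homeo g"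
proof -
  have inj: "inj g" using d by (metis dist_eq_0_iff injI)
  have a: "\<And>x. inv g (g x) = x" using inj by simp
  have b: "\<And>y. g (inv g y) = y" using s by (simp add: surj_f_inv_f)
  have cg: "continuous_on UNIV g"
    unfolding continuous_on_iff using d by metis
  have ci: "continuous_on UNIV (inv g)"
    unfolding continuous_on_iff by (metis d b)
  have "homeomorphism UNIV UNIV g (inv g)"
    unfolding homeomorphism_def using a b cg ci by (auto, metis rangeI, metis rangeI)
  then show ?thesis unfolding is_homeo_def by blast
qed

theorem proposition2p8:
  fixes T :: "'a::metric_space \<Rightarrow> 'a"
    and A :: "'a \<Rightarrow> 'b::complete_space \<Rightarrow> 'b"
  assumes "compact (UNIV :: 'a set)"
    and "continuous_on UNIV T"
    and "has_dense_orbit T"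
    and "\<forall>\<omega>. is_isom (A \<omega>)"
    and "cont_unif_bounded A"
  shows "(\<exists>G :: 'a \<Rightarrow> 'b \<Rightarrow> 'b.
            (\<forall>\<omega>. is_homeo (G \<omega>)) \<and> cont_pointwise G \<and>
            (let F = (\<lambda>(\<omega>, h). (T \<omega>, A \<omega> h));
                 \<G> = (\<lambda>(\<omega>, h). (\<omega>, G \<omega> h));
                 I\<^sub>T = (\<lambda>(\<omega>, h). (T \<omega>, h))
             in inv \<G> \<circ> F \<circ> \<G> = I\<^sub>T))
     \<longleftrightarrow>
         (\<exists>s :: 'a \<Rightarrow> 'b \<Rightarrow> 'a \<Rightarrow> 'b.
            (\<forall>\<omega>0 h0. continuous_on UNIV (s \<omega>0 h0) \<and> s \<omega>0 h0 \<omega>0 = h0 \<and>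
                      (\<forall>\<omega>. A \<omega> (s \<omega>0 h0 \<omega>) = s \<omega>0 h0 (T \<omega>))) \<and>
            (\<forall>\<omega>0 \<omega>. continuous_on UNIV (\<lambda>h0. s \<omega>0 h0 \<omega>)))"
  (is "?L \<longleftrightarrow> ?R")
proof
  assume ?L
  then obtain G :: "'a \<Rightarrow> 'b \<Rightarrow> 'b" where hG: "\<And>\<omega>. is_homeo (G \<omega>)" and cpG: "cont_pointwise G"
    and conj: "inv (\<lambda>(\<omega>, h). (\<omega>, G \<omega> h)) \<circ> (\<lambda>(\<omega>, h). (T \<omega>, A \<omega> h)) \<circ> (\<lambda>(\<omega>, h). (\<omega>, G \<omega> h))
              = (\<lambda>(\<omega>, h). (T \<omega>, h))"
    by (auto simp: Let_def)
  define GG where "GG = (\<lambda>(\<omega>::'a, h::'b). (\<omega>, G \<omega> h))"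
  have surjGG: "surj GG"
  proof -
    have "\<And>a b. GG (a, inv (G a) b) = (a, b)"
      using homeo_facts(1)[OF hG] by (simp add: GG_def bij_def surj_f_inv_f)
    then show ?thesis by (metis surj_def surj_pair)
  qed
  have key: "A \<omega> (G \<omega> h) = G (T \<omega>) h" for \<omega> h
  proof -
    have "inv GG (T \<omega>, A \<omega> (G \<omega> h)) = (T \<omega>, h)"
      using fun_cong[OF conj, of "(\<omega>, h)"] by (simp add: GG_def)
    then have "GG (inv GG (T \<omega>, A \<omega> (G \<omega> h))) = GG (T \<omega>, h)" by simp
    then show ?thesis using surjGG by (simp add: surj_f_inv_f GG_def)
  qed
  define s where "s = (\<lambda>\<omega>0 h0 \<omega>. G \<omega> (inv (G \<omega>0) h0))"
  show ?R
  proof (rule exI[of _ s], intro conjI allI)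
    fix \<omega>0 h0
    show "continuous_on UNIV (s \<omega>0 h0)" using cpG by (simp add: s_def cont_pointwise_def)
    show "s \<omega>0 h0 \<omega>0 = h0" using homeo_facts(1)[OF hG]
      by (simp add: s_def bij_def surj_f_inv_f)
    fix \<omega> show "A \<omega> (s \<omega>0 h0 \<omega>) = s \<omega>0 h0 (T \<omega>)" by (simp add: s_def key)
  next
    fix \<omega>0 \<omega>
    have "continuous_on UNIV (G \<omega> \<circ> inv (G \<omega>0))"
      by (rule continuous_on_compose) (use homeo_facts[OF hG] in \<open>auto intro: continuous_on_subset\<close>)
    then show "continuous_on UNIV (\<lambda>h0. s \<omega>0 h0 \<omega>)" by (simp add: s_def o_def)
  qed
next
  assume ?R
  then obtain s :: "'a \<Rightarrow> 'b \<Rightarrow> 'a \<Rightarrow> 'b" where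
    sc: "\<And>\<omega>0 h0. continuous_on UNIV (s \<omega>0 h0)" and s0: "\<And>\<omega>0 h0. s \<omega>0 h0 \<omega>0 = h0"
    and se: "\<And>\<omega>0 h0 \<omega>. A \<omega> (s \<omega>0 h0 \<omega>) = s \<omega>0 h0 (T \<omega>)"
    and sh: "\<And>\<omega>0 \<omega>. continuous_on UNIV (\<lambda>h0. s \<omega>0 h0 \<omega>)" by blast
  obtain w where w: "closure (range (\<lambda>n. (T ^^ n) w)) = UNIV"
    using assms(3) unfolding has_dense_orbit_def by blast
  have iso: "\<And>x. is_isom (A x)" using assms(4) by blast
  define G where "G = (\<lambda>\<omega> h. s w h \<omega>)"
  have dG: "dist (G \<omega> x) (G \<omega> y) = dist x y" for \<omega> x y
  proof -
    have "dist (s w x \<omega>) (s w y \<omega>) = dist (s w x w) (s w y w)"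
      by (rule sect_dist[OF w sc[where ?\<omega>0.0=w and ?h0.0=x] sc[where ?\<omega>0.0=w and ?h0.0=y] se[where ?\<omega>0.0=w and ?h0.0=x] se[where ?\<omega>0.0=w and ?h0.0=y] iso])
    then show ?thesis by (simp add: G_def s0)
  qed
  have sG: "surj (G \<omega>)" for \<omega>
  proof -
    have "G \<omega> (s \<omega> h' w) = h'" for h'
    proof -
      have "s w (s \<omega> h' w) \<omega> = s \<omega> h' \<omega>"
        by (rule sect_unique[OF w sc[where ?\<omega>0.0=w and ?h0.0="s \<omega> h' w"] sc[where ?\<omega>0.0=\<omega> and ?h0.0=h'] se[where ?\<omega>0.0=w and ?h0.0="s \<omega> h' w"] se[where ?\<omega>0.0=\<omega> and ?h0.0=h']]) (simp add: s0)
      then show ?thesis by (simp add: G_def s0)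
    qed
    then show ?thesis by (metis surj_def)
  qed
  have hG: "is_homeo (G \<omega>)" for \<omega> by (rule isom_homeo[OF dG sG])
  have cpG: "cont_pointwise G" using sc by (simp add: cont_pointwise_def G_def)
  have key: "A \<omega> (G \<omega> h) = G (T \<omega>) h" for \<omega> h by (simp add: G_def se)
  define GG where "GG = (\<lambda>(\<omega>::'a, h::'b). (\<omega>, G \<omega> h))"
  have injGG: "inj GG"
  proof (rule injI)
    fix x y assume "GG x = GG y"
    then show "x = y" using homeo_facts(1)[OF hG]
      by (cases x, cases y) (auto simp: GG_def bij_def inj_def)
  qed
  have "inv GG \<circ> (\<lambda>(\<omega>, h). (T \<omega>, A \<omega> h)) \<circ> GG = (\<lambda>(\<omega>, h). (T \<omega>, h))"
  proof
    fix x :: "'a \<times> 'b"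
    obtain \<omega> h where x: "x = (\<omega>, h)" by (cases x)
    have "(\<lambda>(\<omega>, h). (T \<omega>, A \<omega> h)) (GG x) = GG (T \<omega>, h)" by (simp add: x GG_def key)
    then show "(inv GG \<circ> (\<lambda>(\<omega>, h). (T \<omega>, A \<omega> h)) \<circ> GG) x = (\<lambda>(\<omega>, h). (T \<omega>, h)) x"
      using injGG by (simp add: x)
  qed
  then show ?L using hG cpG unfolding GG_def by (auto simp: Let_def intro!: exI[of _ G])
qed

end
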